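(* Let $A \in \mathcal{C}_n$ and let $I \subset \{1,\dots,n\}$ be an index set such that the principal submatrix $A_I$ is positive definite. Let $u^1,\dots,u^m$ be zeros of $A$ such that for each $l=1,\dots,m$ the set $\operatorname{Supp}(u^l)\setminus I = \{k^l\}$ consists of exactly one element, and normalize $u^l$ so that $u^l_{k^l}=1$. Suppose the normalized zeros $u^1,\dots,u^m$ are mutually different, and suppose that $\operatorname{Supp}(u^r_I) \subset \operatorname{Supp}(u^{r+1}_I)$ for all $r=1,\dots,m-1$. Then the indices $k^1,\dots,k^m$ are mutually different and $u^1,\dots,u^m$ are minimal zeros of $A$. Moreover, if $v$ is a zero of $A$ with $\operatorname{Supp}(v) \subset I \cup \{k^1,\dots,k^m\}$, then $v = \sum_{i=1}^m \alpha_i u^i$ for some nonnegative scalars $\alpha_i$. If in addition $v$ is a minimal zero, then there exist $l \in \{1,\dots,m\}$ and $\alpha>0$ with $v = \alpha u^l$.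
   Context: $\mathcal{C}_n$ denotes the cone of copositive matrices: real symmetric $n\times n$ matrices $A$ with $x^TAx\ge 0$ for all $x\in\mathbb{R}^n_+$. For $A\in\mathcal{C}_n$, a zero of $A$ is a nonzero vector $u\in\mathbb{R}^n_+$ with $u^TAu=0$. The support of $u\in\mathbb{R}^n$ is $\operatorname{Supp}(u)=\{i : u_i\neq 0\}$. A zero $u$ of $A$ is minimal if there is no zero $v$ of $A$ with $\operatorname{Supp}(v)\subsetneq\operatorname{Supp}(u)$. For $I\subset\{1,\dots,n\}$, $A_I=(A_{ij})_{i,j\in I}$ is the principal submatrix and $u_I=(u_i)_{i\in I}$ the subvector. *)

theory Defs
  imports "HOL-Analysis.Analysis"
begin

definition nonneg_vec :: "real^'n \<Rightarrow> bool" where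
  "nonneg_vec x \<longleftrightarrow> (\<forall>i. 0 \<le> x $ i)"

definition copositive :: "real^'n^'n \<Rightarrow> bool" where
  "copositive A \<longleftrightarrow> transpose A = A \<and> (\<forall>x. nonneg_vec x \<longrightarrow> 0 \<le> x \<bullet> (A *v x))"

definition supp :: "real^'n \<Rightarrow> 'n set" where
  "supp x = {i. x $ i \<noteq> 0}"

definition is_zero :: "real^'n^'n \<Rightarrow> real^'n \<Rightarrow> bool" where
  "is_zero A u \<longleftrightarrow> nonneg_vec u \<and> u \<noteq> 0 \<and> u \<bullet> (A *v u) = 0"

definition minimal_zero :: "real^'n^'n \<Rightarrow> real^'n \<Rightarrow> bool" where
  "minimal_zero A u \<longleftrightarrow> is_zero A u \<and> \<not> (\<exists>v. is_zero A v \<and> supp v \<subset> supp u)"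

text \<open>The principal submatrix A_I is positive definite: x_I^T A_I x_I > 0 for every
  nonzero x_I in R^I, vectors in R^I being identified with vectors of R^n vanishing off I.\<close>
definition principal_pos_def :: "real^'n^'n \<Rightarrow> 'n set \<Rightarrow> bool" where
  "principal_pos_def A I \<longleftrightarrow>
     (\<forall>x::real^'n. supp x \<subseteq> I \<and> x \<noteq> 0 \<longrightarrow> 0 < x \<bullet> (A *v x))"

end

theory Submission
  imports Defs
begin

lemma Q_sym:
  fixes A :: "real^'n^'n"
  assumes "transpose A = A"
  shows "x \<bullet> (A *v y) = y \<bullet> (A *v x)"
proof -
  have "x \<bullet> (A *v y) = (x v* A) \<bullet> y" by (simp add: dot_lmul_matrix)
  also have "x v* A = A *v x" using vector_transpose_matrix[of x A] assms by simp
  finally show ?thesis by (simp add: inner_commute)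
qed

lemma Q_expand: "x \<bullet> (A *v y) = (\<Sum>i\<in>UNIV. x $ i * (A *v y) $ i)"
  by (simp add: inner_vec_def)

lemma Q_axis: "axis i 1 \<bullet> (A *v y) = (A *v y) $ i"
  by (simp add: inner_axis')

lemma Q_axis2: "axis i 1 \<bullet> (A *v axis i 1) = (A::real^'n^'n) $ i $ i"
proof -
  have "(A *v axis i 1) $ i = (\<Sum>j\<in>UNIV. A$i$j * (if j = i then 1 else 0))"
    by (simp add: matrix_vector_mult_def axis_def)
  also have "\<dots> = (\<Sum>j\<in>UNIV. if j = i then A$i$j else 0)" by (rule sum.cong) auto
  also have "\<dots> = A$i$i" by simp
  finally show ?thesis by (simp add: Q_axis)
qed

lemma small_t:
  fixes a b d :: real
  assumes "a < 0" "0 \<le> b" "0 < d"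
  shows "\<exists>t. 0 < t \<and> t \<le> d \<and> 2*t*a + t^2*b < 0"
proof -
  define t where "t = min d (-a/(b+1))"
  have "0 < -a/(b+1)" using assms by (intro divide_pos_pos) auto
  hence t0: "0 < t" using assms by (simp add: t_def)
  have "t \<le> -a/(b+1)" by (simp add: t_def)
  hence "t*(b+1) \<le> (-a/(b+1))*(b+1)" using assms by (intro mult_right_mono) auto
  hence "t*(b+1) \<le> -a" using assms by simp
  hence "2*a + t*b < 0" using assms t0 by (simp add: algebra_simps)
  hence "t * (2*a + t*b) < 0" using t0 by (simp add: mult_pos_neg)
  thus ?thesis using t0 by (intro exI[of _ t]) (auto simp: t_def power2_eq_square algebra_simps)
qed

lemma quad_expand:
  fixes A :: "real^'n^'n"
  assumes "transpose A = A"
  shows "(x + t *\<^sub>R y) \<bullet> (A *v (x + t *\<^sub>R y)) = x \<bullet> (A *v x) + 2*t*(y \<bullet> (A *v x)) + t^2 * (y \<bullet> (A *v y))"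
  using Q_sym[OF assms, of x y]
  by (simp add: matrix_vector_right_distrib matrix_vector_mult_scaleR inner_add_left inner_add_right power2_eq_square algebra_simps)

lemma zero_grad:
  fixes A :: "real^'n^'n"
  assumes cop: "copositive A" and z: "is_zero A u"
  shows "0 \<le> (A *v u) $ i" and "u $ i \<noteq> 0 \<Longrightarrow> (A *v u) $ i = 0"
proof -
  have sym: "transpose A = A" using cop by (simp add: copositive_def)
  have nn: "\<And>x. nonneg_vec x \<Longrightarrow> 0 \<le> x \<bullet> (A *v x)" using cop by (simp add: copositive_def)
  have u0: "u \<bullet> (A *v u) = 0" and un: "nonneg_vec u" using z by (auto simp: is_zero_def)
  let ?e = "axis i (1::real)"
  have "nonneg_vec ?e" by (simp add: nonneg_vec_def axis_def)
  from nn[OF this] have Aii: "0 \<le> A $ i $ i" by (simp only: Q_axis2)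
  have ex: "\<And>t. (u + t *\<^sub>R ?e) \<bullet> (A *v (u + t *\<^sub>R ?e)) = 2*t*((A *v u) $ i) + t^2 * A$i$i"
    using quad_expand[OF sym] u0 Q_axis2[of i A] by (simp add: Q_axis)
  show g: "0 \<le> (A *v u) $ i"
  proof (rule ccontr)
    assume "\<not> ?thesis"
    then obtain t where t: "0 < t" "2*t*((A *v u) $ i) + t^2 * A$i$i < 0"
      using small_t[of "(A *v u) $ i" "A$i$i" 1] Aii by auto
    have "nonneg_vec (u + t *\<^sub>R ?e)" using un t by (simp add: nonneg_vec_def axis_def)
    from nn[OF this] ex[of t] t show False by simp
  qed
  assume ui: "u $ i \<noteq> 0"
  hence upos: "0 < u $ i" using un by (simp add: nonneg_vec_def order_le_neq_trans)
  show "(A *v u) $ i = 0"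
  proof (rule ccontr)
    assume "\<not> ?thesis"
    hence "- (A *v u) $ i < 0" using g by simp
    then obtain t where t: "0 < t" "t \<le> u $ i" "2*t*(- (A *v u) $ i) + t^2 * A$i$i < 0"
      using small_t[of "- (A *v u) $ i" "A$i$i" "u$i"] Aii upos by auto
    have "nonneg_vec (u + (-t) *\<^sub>R ?e)" using un t by (simp add: nonneg_vec_def axis_def)
    from nn[OF this] ex[of "-t"] t show False by simp
  qed
qed

lemma sum_single:
  assumes "finite S" "a \<in> S" "\<forall>i\<in>S. i \<noteq> a \<longrightarrow> f i = (0::real)"
  shows "sum f S = f a"
  using assms by (simp add: sum.remove sum.neutral)

lemma Q_supp_zero:
  fixes A :: "real^'n^'n"
  assumes "\<And>i. x $ i \<noteq> 0 \<Longrightarrow> (A *v y) $ i = 0"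
  shows "x \<bullet> (A *v y) = 0"
proof -
  have "(\<Sum>i\<in>UNIV. x $ i * (A *v y) $ i) = 0" using assms by (intro sum.neutral) auto
  thus ?thesis by (simp add: Q_expand)
qed

lemma Q_nonneg:
  fixes A :: "real^'n^'n"
  assumes "nonneg_vec x" "\<And>i. 0 \<le> (A *v y) $ i"
  shows "0 \<le> x \<bullet> (A *v y)"
proof -
  have "0 \<le> (\<Sum>i\<in>UNIV. x $ i * (A *v y) $ i)" using assms by (intro sum_nonneg) (auto simp: nonneg_vec_def)
  thus ?thesis by (simp add: Q_expand)
qed

lemma Q_diff:
  fixes A :: "real^'n^'n"
  assumes "transpose A = A"
  shows "(x - y) \<bullet> (A *v (x - y)) = x \<bullet> (A *v x) - 2*(y \<bullet> (A *v x)) + y \<bullet> (A *v y)"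
  using quad_expand[OF assms, of x "-1" y] by simp

lemma Q_sum_left:
  "(\<Sum>l\<in>S. c l *\<^sub>R w l) \<bullet> (A *v y) = (\<Sum>l\<in>S. c l * (w l \<bullet> (A *v y)))"
  by (simp add: inner_sum_left)

lemma pd_zero:
  assumes "principal_pos_def A I" "supp d \<subseteq> I" "d \<bullet> (A *v d) \<le> 0"
  shows "d = 0"
  using assms unfolding principal_pos_def_def by force

theorem theorem3p12:
  fixes A :: "real^'n^'n" and I :: "'n set" and m :: nat
    and u :: "nat \<Rightarrow> real^'n" and k :: "nat \<Rightarrow> 'n"
  assumes cop: "copositive A"
    and pd: "principal_pos_def A I"
    and zeros: "\<forall>l\<in>{1..m}. is_zero A (u l)"
    and outside: "\<forall>l\<in>{1..m}. supp (u l) - I = {k l}"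
    and normal: "\<forall>l\<in>{1..m}. u l $ k l = 1"
    and distinct: "inj_on u {1..m}"
    and chain: "\<forall>r\<in>{1..<m}. supp (u r) \<inter> I \<subseteq> supp (u (Suc r)) \<inter> I"
  shows "inj_on k {1..m}
    \<and> (\<forall>l\<in>{1..m}. minimal_zero A (u l))
    \<and> (\<forall>v. is_zero A v \<and> supp v \<subseteq> I \<union> k ` {1..m} \<longrightarrow>
          (\<exists>\<alpha>::nat \<Rightarrow> real. (\<forall>i\<in>{1..m}. 0 \<le> \<alpha> i) \<and> v = (\<Sum>i=1..m. \<alpha> i *\<^sub>R u i))
          \<and> (minimal_zero A v \<longrightarrow> (\<exists>l\<in>{1..m}. \<exists>a>0. v = a *\<^sub>R u l)))"
proof -
  have sym: "transpose A = A" using cop by (simp add: copositive_def)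
  have kI: "k l \<notin> I" "u l $ k l \<noteq> 0" "\<And>i. u l $ i \<noteq> 0 \<Longrightarrow> i \<in> I \<or> i = k l"
    if "l \<in> {1..m}" for l
    using outside that unfolding supp_def by (auto simp: set_eq_iff)
  have uz: "is_zero A (u l)" if "l \<in> {1..m}" for l using zeros that by auto
  have unn: "0 \<le> u l $ i" if "l \<in> {1..m}" for l i using uz[OF that] by (simp add: is_zero_def nonneg_vec_def)
  have gr: "0 \<le> (A *v u l) $ i" if "l \<in> {1..m}" for l i using zero_grad(1)[OF cop uz[OF that]] .
  have gr0: "(A *v u l) $ i = 0" if "l \<in> {1..m}" "u l $ i \<noteq> 0" for l i
    using zero_grad(2)[OF cop uz[OF that(1)] that(2)] .
  have chain_tr: "\<forall>r. 1 \<le> r \<longrightarrow> r \<le> s \<longrightarrow> s \<le> m \<longrightarrow> supp (u r) \<inter> I \<subseteq> supp (u s) \<inter> I" for s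
  proof (induction s)
    case 0 then show ?case by auto
  next
    case (Suc s)
    show ?case
    proof (intro allI impI)
      fix r assume r: "1 \<le> r" "r \<le> Suc s" "Suc s \<le> m"
      show "supp (u r) \<inter> I \<subseteq> supp (u (Suc s)) \<inter> I"
      proof (cases "r = Suc s")
        case False
        hence "supp (u r) \<inter> I \<subseteq> supp (u s) \<inter> I" using Suc.IH r by auto
        moreover have "supp (u s) \<inter> I \<subseteq> supp (u (Suc s)) \<inter> I" using chain r False by auto
        ultimately show ?thesis by blast
      qed simp
    qed
  qed
  have chainI: "u r $ i \<noteq> 0 \<Longrightarrow> i \<in> I \<Longrightarrow> u s $ i \<noteq> 0" if "1 \<le> r" "r \<le> s" "s \<le> m" for r s i
    using chain_tr[of s] that unfolding supp_def by auto
  have uniq: "x = y" if "is_zero A x" "is_zero A y" "supp x \<subseteq> supp y" "supp (x - y) \<subseteq> I" for x y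
  proof -
    have "x \<bullet> (A *v x) = 0" "y \<bullet> (A *v y) = 0" using that by (auto simp: is_zero_def)
    moreover have "x \<bullet> (A *v y) = 0"
      using that(3) by (intro Q_supp_zero zero_grad(2)[OF cop that(2)]) (auto simp: supp_def)
    moreover have "y \<bullet> (A *v x) = x \<bullet> (A *v y)" using Q_sym[OF sym] by simp
    ultimately have "(x - y) \<bullet> (A *v (x - y)) = 0" by (simp add: Q_diff[OF sym])
    with pd_zero[OF pd that(4)] show ?thesis by simp
  qed
  have kneq: "False" if rs: "r \<in> {1..m}" "s \<in> {1..m}" "r < s" "k r = k s" for r s
  proof -
    have "supp (u r) \<subseteq> supp (u s)"
    proof
      fix i assume "i \<in> supp (u r)"
      hence ur: "u r $ i \<noteq> 0" by (simp add: supp_def)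
      with kI(3)[OF rs(1)] have "i \<in> I \<or> i = k r" by blast
      thus "i \<in> supp (u s)"
      proof
        assume "i \<in> I"
        hence "u s $ i \<noteq> 0" using chainI[of r s i] ur rs(1,2,3) by simp
        thus ?thesis by (simp add: supp_def)
      next
        assume "i = k r"
        hence "i = k s" using rs(4) by simp
        thus ?thesis using kI(2)[OF rs(2)] by (simp add: supp_def)
      qed
    qed
    moreover have "supp (u r - u s) \<subseteq> I"
    proof
      fix i assume i: "i \<in> supp (u r - u s)"
      show "i \<in> I"
      proof (rule ccontr)
        assume iI: "i \<notin> I"
        from i have "u r $ i \<noteq> 0 \<or> u s $ i \<noteq> 0" by (auto simp: supp_def)
        hence ik: "i = k r \<or> i = k s" using kI(3)[OF rs(1), of i] kI(3)[OF rs(2), of i] iI by blast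
        have n1: "u r $ k r = 1" "u s $ k s = 1" using normal rs(1,2) by auto
        have "u r $ i = 1" "u s $ i = 1" using ik n1 rs(4) by metis+
        moreover have "(u r - u s) $ i \<noteq> 0" using i by (simp add: supp_def)
        ultimately show False by simp
      qed
    qed
    ultimately have "u r = u s" using uniq[OF uz[OF rs(1)] uz[OF rs(2)]] by blast
    moreover have "r \<noteq> s" using rs(3) by simp
    ultimately show False using distinct rs(1,2) unfolding inj_on_def by blast
  qed
  have injk: "inj_on k {1..m}"
  proof (rule inj_onI)
    fix r s assume H: "r \<in> {1..m}" "s \<in> {1..m}" "k r = k s"
    show "r = s"
    proof (rule ccontr)
      assume "r \<noteq> s"
      hence "r < s \<or> s < r" by arith
      thus False using kneq[OF H(1,2) _ H(3)] kneq[OF H(2,1) _ H(3)[symmetric]] by blast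
    qed
  qed
  have ukj: "u l $ k j = (if l = j then 1 else 0)" if "l \<in> {1..m}" "j \<in> {1..m}" for l j
  proof (cases "l = j")
    case True
    have "u l $ k l = 1" using normal that(1) by blast
    then show ?thesis using True by simp
  next
    case False
    hence "k j \<noteq> k l" using inj_on_eq_iff[OF injk that(2) that(1)] by simp
    moreover have "k j \<notin> I" using kI(1)[OF that(2)] .
    ultimately have "u l $ k j = 0" using kI(3)[OF that(1), of "k j"] by blast
    thus ?thesis using False by simp
  qed
  have minl: "minimal_zero A (u l)" if l: "l \<in> {1..m}" for l
  proof -
    have "\<not> (is_zero A v \<and> supp v \<subset> supp (u l))" for v
    proof
      assume H: "is_zero A v \<and> supp v \<subset> supp (u l)"
      have vnn: "nonneg_vec v" and v0: "v \<noteq> 0" and vq: "v \<bullet> (A *v v) = 0" using H by (auto simp: is_zero_def)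
      have vsub: "\<And>i. v $ i \<noteq> 0 \<Longrightarrow> u l $ i \<noteq> 0" using H by (auto simp: supp_def)
      show False
      proof (cases "v $ k l = 0")
        case True
        have "supp v \<subseteq> I"
        proof
          fix i assume "i \<in> supp v"
          hence "v $ i \<noteq> 0" by (simp add: supp_def)
          thus "i \<in> I" using vsub kI(3)[OF l, of i] True by auto
        qed
        from pd_zero[OF pd this] vq v0 show False by simp
      next
        case False
        define c where "c = v $ k l"
        have c0: "0 < c" using False vnn by (simp add: c_def nonneg_vec_def order_le_neq_trans)
        define v' where "v' = (1/c) *\<^sub>R v"
        have v'i: "v' $ i = v $ i / c" for i by (simp add: v'_def)
        have sv: "supp v' = supp v" using c0 by (simp add: supp_def v'i)
        have "nonneg_vec v'" using vnn c0 by (simp add: nonneg_vec_def v'i)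
        moreover have "v' \<noteq> 0" using v0 c0 by (simp add: v'_def)
        moreover have "v' \<bullet> (A *v v') = (1/c) * (1/c) * (v \<bullet> (A *v v))"
          by (simp add: v'_def matrix_vector_mult_scaleR)
        ultimately have zv': "is_zero A v'" using vq by (simp add: is_zero_def)
        have "supp (v' - u l) \<subseteq> I"
        proof
          fix i assume i: "i \<in> supp (v' - u l)"
          show "i \<in> I"
          proof (rule ccontr)
            assume iI: "i \<notin> I"
            show False
            proof (cases "u l $ i = 0")
              case True
              hence "v $ i = 0" using vsub by auto
              thus False using i True by (simp add: supp_def v'i)
            next
              case False
              hence "i = k l" using kI(3)[OF l] iI by auto
              thus False using i c0 normal l by (simp add: supp_def v'i c_def)
            qed
          qed
        qed
        moreover have "supp v' \<subseteq> supp (u l)" using sv H by blast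
        ultimately have "v' = u l" using uniq[OF zv' uz[OF l]] by blast
        hence "supp v = supp (u l)" using sv by simp
        thus False using H by blast
      qed
    qed
    thus ?thesis using uz[OF l] by (auto simp: minimal_zero_def)
  qed
  have P_lt: "u j \<bullet> (A *v u l) = (A *v u l) $ k j" if "j \<in> {1..m}" "l \<in> {1..m}" "j < l" for j l
  proof -
    have "u j \<bullet> (A *v u l) = (\<Sum>i\<in>UNIV. u j $ i * (A *v u l) $ i)" by (simp add: Q_expand)
    also have "\<dots> = u j $ k j * (A *v u l) $ k j"
    proof (rule sum_single)
      show "\<forall>i\<in>UNIV. i \<noteq> k j \<longrightarrow> u j $ i * (A *v u l) $ i = 0"
      proof (intro ballI impI)
        fix i assume "i \<noteq> k j"
        show "u j $ i * (A *v u l) $ i = 0"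
        proof (cases "u j $ i = 0")
          case False
          hence "i \<in> I" using kI(3)[OF that(1)] \<open>i \<noteq> k j\<close> by auto
          hence "u l $ i \<noteq> 0" using chainI[of j l i] False that by auto
          thus ?thesis using gr0[OF that(2)] by simp
        qed simp
      qed
    qed auto
    finally show ?thesis using normal that(1) by simp
  qed
  have P_bd: "u j \<bullet> (A *v u l) \<le> (A *v u l) $ k j + (A *v u j) $ k l" if "j \<in> {1..m}" "l \<in> {1..m}" for j l
  proof (cases j l rule: linorder_cases)
    case less then show ?thesis using P_lt[OF that less] gr[OF that(1)] by simp
  next
    case equal
    then have "u j \<bullet> (A *v u l) = 0" using uz[OF that(1)] by (simp add: is_zero_def)
    then show ?thesis using gr that by (simp add: add_nonneg_nonneg)
  next
    case greater
    have "u j \<bullet> (A *v u l) = u l \<bullet> (A *v u j)" using Q_sym[OF sym] by simp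
    then show ?thesis using P_lt[OF that(2,1) greater] gr[OF that(2)] by simp
  qed
  have rep: "\<exists>\<alpha>::nat \<Rightarrow> real. (\<forall>i\<in>{1..m}. 0 \<le> \<alpha> i) \<and> v = (\<Sum>i=1..m. \<alpha> i *\<^sub>R u i)"
    if v: "is_zero A v" "supp v \<subseteq> I \<union> k ` {1..m}" for v
  proof -
    define c where "c j = v $ k j" for j
    have vnn: "0 \<le> v $ i" for i using v by (simp add: is_zero_def nonneg_vec_def)
    have c0: "0 \<le> c j" for j by (simp add: c_def vnn)
    define w where "w = (\<Sum>j=1..m. c j *\<^sub>R u j)"
    have wi: "w $ i = (\<Sum>j=1..m. c j * u j $ i)" for i by (simp add: w_def)
    have sd: "supp (w - v) \<subseteq> I"
    proof
      fix i assume i: "i \<in> supp (w - v)"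
      show "i \<in> I"
      proof (rule ccontr)
        assume iI: "i \<notin> I"
        show False
        proof (cases "i \<in> k ` {1..m}")
          case True
          then obtain j where j: "j \<in> {1..m}" "i = k j" by auto
          have "w $ i = (\<Sum>l=1..m. c l * (if l = j then 1 else 0))"
            unfolding wi j(2)
          proof (rule sum.cong)
            fix l assume "l \<in> {1..m}"
            from ukj[OF this j(1)] show "c l * u l $ k j = c l * (if l = j then 1 else 0)" by simp
          qed simp
          also have "\<dots> = c j" using j(1) by (simp add: if_distrib cong: if_cong)
          finally show False using i j by (simp add: supp_def c_def)
        next
          case False
          have "v $ i = 0" using v(2) iI False by (auto simp: supp_def)
          moreover have "u l $ i = 0" if "l \<in> {1..m}" for l
            using kI(3)[OF that, of i] iI False that by auto
          ultimately show False using i by (simp add: supp_def wi)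
        qed
      qed
    qed
    define S1 where "S1 = (\<Sum>l=1..m. \<Sum>j=1..m. c l * c j * (A *v u l) $ k j)"
    have Qww: "w \<bullet> (A *v w) = (\<Sum>l=1..m. c l * (\<Sum>j=1..m. c j * (u j \<bullet> (A *v u l))))"
    proof -
      have "w \<bullet> (A *v w) = (\<Sum>l=1..m. c l * (u l \<bullet> (A *v w)))" unfolding w_def[of] by (simp only: Q_sum_left)
      also have "\<dots> = (\<Sum>l=1..m. c l * (w \<bullet> (A *v u l)))" using Q_sym[OF sym] by simp
      also have "\<dots> = (\<Sum>l=1..m. c l * (\<Sum>j=1..m. c j * (u j \<bullet> (A *v u l))))"
        unfolding w_def by (simp only: Q_sum_left)
      finally show ?thesis .
    qed
    have "w \<bullet> (A *v w) \<le> (\<Sum>l=1..m. c l * (\<Sum>j=1..m. c j * ((A *v u l) $ k j + (A *v u j) $ k l)))"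
      unfolding Qww
      by (intro sum_mono mult_left_mono c0) (auto simp: P_bd)
    also have "\<dots> = (\<Sum>l=1..m. \<Sum>j=1..m. c l * c j * (A *v u l) $ k j + c l * c j * (A *v u j) $ k l)"
      by (simp only: sum_distrib_left distrib_left mult.assoc)
    also have "\<dots> = S1 + (\<Sum>l=1..m. \<Sum>j=1..m. c l * c j * (A *v u j) $ k l)"
      by (simp only: sum.distrib S1_def)
    also have "(\<Sum>l=1..m. \<Sum>j=1..m. c l * c j * (A *v u j) $ k l) = S1"
      unfolding S1_def by (subst sum.swap) (simp add: mult_ac)
    finally have wwle: "w \<bullet> (A *v w) \<le> 2 * S1" by simp
    have Qvl: "(\<Sum>j=1..m. c j * (A *v u l) $ k j) \<le> v \<bullet> (A *v u l)" if l: "l \<in> {1..m}" for l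
    proof -
      have "(\<Sum>j=1..m. c j * (A *v u l) $ k j) = (\<Sum>i\<in>k ` {1..m}. v $ i * (A *v u l) $ i)"
        by (subst sum.reindex[OF injk]) (simp add: c_def)
      also have "\<dots> \<le> (\<Sum>i\<in>UNIV. v $ i * (A *v u l) $ i)"
        by (rule sum_mono2) (auto intro: mult_nonneg_nonneg vnn gr[OF l])
      also have "\<dots> = v \<bullet> (A *v u l)" by (simp add: Q_expand)
      finally show ?thesis .
    qed
    have wv: "w \<bullet> (A *v v) = (\<Sum>l=1..m. c l * (v \<bullet> (A *v u l)))"
      unfolding w_def Q_sum_left using Q_sym[OF sym] by simp
    have "S1 = (\<Sum>l=1..m. c l * (\<Sum>j=1..m. c j * (A *v u l) $ k j))"
      by (simp add: S1_def sum_distrib_left mult_ac)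
    also have "\<dots> \<le> w \<bullet> (A *v v)" unfolding wv
      by (intro sum_mono mult_left_mono c0 Qvl) auto
    finally have S1le: "S1 \<le> w \<bullet> (A *v v)" .
    have vv: "v \<bullet> (A *v v) = 0" using v by (simp add: is_zero_def)
    have "(w - v) \<bullet> (A *v (w - v)) = w \<bullet> (A *v w) - 2 * (v \<bullet> (A *v w)) + v \<bullet> (A *v v)"
      by (rule Q_diff[OF sym])
    also have "v \<bullet> (A *v w) = w \<bullet> (A *v v)" using Q_sym[OF sym] by simp
    finally have "(w - v) \<bullet> (A *v (w - v)) \<le> 0" using wwle S1le vv by simp
    from pd_zero[OF pd sd this] have "v = w" by simp
    thus ?thesis using c0 by (intro exI[of _ c]) (simp add: w_def)
  qed
  have minrep: "\<exists>l\<in>{1..m}. \<exists>a>0. v = a *\<^sub>R u l"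
    if mv: "minimal_zero A v" and c0: "\<forall>i\<in>{1..m}. 0 \<le> c i" and vc: "v = (\<Sum>i=1..m. c i *\<^sub>R u i)" for v c
  proof -
    have vz: "is_zero A v" using mv by (simp add: minimal_zero_def)
    have "v \<noteq> 0" using vz by (simp add: is_zero_def)
    moreover have "v = 0" if "\<forall>i\<in>{1..m}. c i = 0" using that unfolding vc by (intro sum.neutral) auto
    ultimately obtain l where l: "l \<in> {1..m}" "c l \<noteq> 0" by blast
    have cl: "0 < c l" using c0 l by (simp add: order_le_neq_trans)
    have vi: "v $ i = (\<Sum>j=1..m. c j * u j $ i)" for i by (simp add: vc)
    have ge: "c j * u j $ i \<le> v $ i" if "j \<in> {1..m}" for j i
      unfolding vi using that c0 unn by (intro member_le_sum) auto
    have "supp (u l) \<subseteq> supp v"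
    proof
      fix i assume "i \<in> supp (u l)"
      hence "0 < u l $ i" using unn[OF l(1)] by (simp add: supp_def order_le_neq_trans)
      hence "0 < c l * u l $ i" using cl by simp
      thus "i \<in> supp v" using ge[OF l(1), of i] by (simp add: supp_def)
    qed
    hence seq: "supp (u l) = supp v" using mv uz[OF l(1)] by (auto simp: minimal_zero_def)
    have cj0: "c j = 0" if j: "j \<in> {1..m}" "j \<noteq> l" for j
    proof (rule ccontr)
      assume "c j \<noteq> 0"
      hence "0 < c j * u j $ k j" using c0 j normal by (simp add: order_le_neq_trans)
      hence "k j \<in> supp v" using ge[OF j(1), of "k j"] by (simp add: supp_def)
      hence "k j \<in> supp (u l)" using seq by simp
      hence "u l $ k j \<noteq> 0" by (simp add: supp_def)
      thus False using ukj[OF l(1) j(1)] j by simp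
    qed
    have "v = (\<Sum>i=1..m. if i = l then c l *\<^sub>R u l else 0)"
      unfolding vc by (rule sum.cong) (auto simp: cj0)
    also have "\<dots> = c l *\<^sub>R u l" using l(1) by simp
    finally show ?thesis using l(1) cl by blast
  qed
  show ?thesis using injk minl rep minrep by blast
qed

end
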